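(* Let $S\subseteq\{0,1\}^n$, $f\in[0,1/2]$, $m>0$, $T>0$ integers, and let $h_m^1,\dots,h_m^T$ be hash functions sampled independently from $\mathcal{H}^f_{m\times n}$. Let $Y_k=\mathbb{I}[S(h_m^k)\ge1]$, $Y=\sum_{k=1}^T Y_k$, and $\Pr_{\mathrm{est}}[S(h)\ge1]=Y/T$. Let $\kappa>0$ and $c>0$. Define the random variable $\mathcal{B}$ to equal $\frac{2^m c}{1+\kappa}$ if $\Pr_{\mathrm{est}}[S(h)\ge1]\ge c$, and $0$ otherwise. Then $$\Pr\left[|S|\ge\mathcal{B}\right]\ge 1-\exp\left(-\frac{\kappa^2cT}{(1+\kappa)(2+\kappa)}\right).$$
   Context: For integers $1\le m\le n$ and $f\in[0,1/2]$, sampling $h$ from $\mathcal{H}^f_{m\times n}$ means $h(x)=Ax+b\bmod 2$ with $A\in\{0,1\}^{m\times n}$ having i.i.d. entries with $\Pr[A_{ij}=1]=f$ and $b\in\{0,1\}^m$ uniform and independent of $A$. For $S\subseteq\{0,1\}^n$, $S(h)=|\{x\in S:h(x)=0\}|$. *)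

theory Defs
  imports "HOL-Probability.Probability"
begin

fun iid_list :: "nat \<Rightarrow> 'a pmf \<Rightarrow> 'a list pmf" where
  "iid_list 0 p = return_pmf []"
| "iid_list (Suc k) p = bind_pmf p (\<lambda>x. bind_pmf (iid_list k p) (\<lambda>xs. return_pmf (x # xs)))"

text \<open>Vectors in {0,1}^n are bool lists of length n; a hash h(x) = Ax + b mod 2 is
  the pair (A, b) with A a list of m rows (each a bool list of length n) and b a bool list of length m.\<close>
type_synonym hash = "bool list list \<times> bool list"

definition hash_family :: "real \<Rightarrow> nat \<Rightarrow> nat \<Rightarrow> hash pmf" where
  "hash_family f m n =
     bind_pmf (iid_list m (iid_list n (bernoulli_pmf f))) (\<lambda>A.
     bind_pmf (iid_list m (bernoulli_pmf (1/2))) (\<lambda>b. return_pmf (A, b)))"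

definition dot2 :: "bool list \<Rightarrow> bool list \<Rightarrow> bool" where
  "dot2 r x = odd (length (filter id (map2 (\<and>) r x)))"

definition hash_zero :: "hash \<Rightarrow> bool list \<Rightarrow> bool" where
  "hash_zero h x = (\<forall>i < length (snd h). dot2 (fst h ! i) x = snd h ! i)"

definition S_count :: "bool list set \<Rightarrow> hash \<Rightarrow> nat" where
  "S_count S h = card {x \<in> S. hash_zero h x}"

end

theory Submission imports Defs begin

lemma iid_list_Suc_map:
  "iid_list (Suc k) p = map_pmf (\<lambda>(x,xs). x # xs) (pair_pmf p (iid_list k p))"
  by (simp add: pair_pmf_def map_bind_pmf map_return_pmf)

lemma set_iid_list: "xs \<in> set_pmf (iid_list k p) \<Longrightarrow> length xs = k"
  by (induction k arbitrary: xs) (auto simp: set_bind_pmf)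

lemma pmf_iid_list_le:
  assumes "\<And>x. pmf p x \<le> 1/2"
  shows "pmf (iid_list k p) v \<le> (1/2)^k"
proof (induction k arbitrary: v)
  case 0 then show ?case by (simp add: pmf_le_1)
next
  case (Suc k)
  show ?case
  proof (cases v)
    case Nil
    have "v \<notin> set_pmf (iid_list (Suc k) p)" using Nil set_iid_list by fastforce
    then show ?thesis by (simp add: set_pmf_eq)
  next
    case (Cons y ys)
    have inj: "inj (\<lambda>(x::'a,xs). x # xs)" by (auto simp: inj_def)
    have "pmf (iid_list (Suc k) p) v = pmf p y * pmf (iid_list k p) ys"
      unfolding iid_list_Suc_map Cons
      using pmf_map_inj'[OF inj, of "pair_pmf p (iid_list k p)" "(y,ys)"]
      by (simp add: pmf_pair)
    also have "\<dots> \<le> 1/2 * (1/2)^k"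
      by (rule mult_mono) (use assms Suc in auto)
    finally show ?thesis by simp
  qed
qed

lemma binom_map:
  fixes Q :: "'a \<Rightarrow> bool"
  shows "map_pmf (\<lambda>xs. length (filter Q xs)) (iid_list T P) = binomial_pmf T (measure_pmf.prob P {x. Q x})"
proof (induction T)
  case 0
  then show ?case by (simp add: binomial_pmf_0)
next
  case (Suc T)
  let ?p = "measure_pmf.prob P {x. Q x}"
  have p01: "?p \<in> {0..1}" by auto
  have bern: "map_pmf Q P = bernoulli_pmf ?p"
  proof (rule pmf_eqI)
    fix b show "pmf (map_pmf Q P) b = pmf (bernoulli_pmf ?p) b"
    proof (cases b)
      case True
      then show ?thesis by (simp add: pmf_map vimage_def)
    next
      case False
      have "measure_pmf.prob P (Q -` {False}) = 1 - ?p"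
        using measure_pmf.prob_compl[of "{x. Q x}" P] by (simp add: vimage_def Compl_eq_Diff_UNIV[symmetric] set_diff_eq)
      then show ?thesis using False by (simp add: pmf_map)
    qed
  qed
  have "map_pmf (\<lambda>xs. length (filter Q xs)) (iid_list (Suc T) P) =
     bind_pmf P (\<lambda>x. bind_pmf (map_pmf (\<lambda>xs. length (filter Q xs)) (iid_list T P)) (\<lambda>k. return_pmf ((if Q x then 1 else 0) + k)))"
    by (auto simp: map_bind_pmf map_return_pmf bind_map_pmf intro!: bind_pmf_cong)
  also have "\<dots> = bind_pmf (map_pmf Q P) (\<lambda>b. bind_pmf (binomial_pmf T ?p) (\<lambda>k. return_pmf ((if b then 1 else 0) + k)))"
    by (simp add: Suc bind_map_pmf)
  also have "\<dots> = binomial_pmf (Suc T) ?p"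
    by (simp add: bern binomial_pmf_Suc[OF p01])
  finally show ?case .
qed


lemma hash_zero_prob:
  "measure_pmf.prob (hash_family f m n) {h. hash_zero h x} \<le> (1/2)^m"
proof -
  let ?PA = "iid_list m (iid_list n (bernoulli_pmf f))"
  let ?PB = "iid_list m (bernoulli_pmf (1/2))"
  define g where "g A = map (\<lambda>i. dot2 (A!i) x) [0..<m]" for A :: "bool list list"
  have inner: "emeasure ?PB {b. hash_zero (A,b) x} \<le> ennreal ((1/2)^m)" for A
  proof -
    have "emeasure ?PB {b. hash_zero (A,b) x} = emeasure ?PB ({b. hash_zero (A,b) x} \<inter> set_pmf ?PB)"
      by (simp add: emeasure_Int_set_pmf)
    also have "\<dots> \<le> emeasure ?PB {g A}"
    proof (rule emeasure_mono)
      show "{b. hash_zero (A, b) x} \<inter> set_pmf ?PB \<subseteq> {g A}"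
      proof
        fix b assume b: "b \<in> {b. hash_zero (A, b) x} \<inter> set_pmf ?PB"
        then have len: "length b = m" using set_iid_list by blast
        from b have "\<forall>i<length b. dot2 (A ! i) x = b ! i" by (simp add: hash_zero_def)
        then have "b = g A" using len by (intro nth_equalityI) (auto simp: g_def)
        then show "b \<in> {g A}" by simp
      qed
    qed simp
    also have "\<dots> = ennreal (pmf ?PB (g A))" by (simp add: emeasure_pmf_single)
    also have "\<dots> \<le> ennreal ((1/2)^m)"
      by (intro ennreal_leI pmf_iid_list_le) simp
    finally show ?thesis .
  qed
  have "emeasure (hash_family f m n) {h. hash_zero h x} =
        (\<integral>\<^sup>+A. emeasure ?PB {b. hash_zero (A,b) x} \<partial>?PA)"
    unfolding hash_family_def
    by (simp add: map_pmf_def[symmetric] vimage_def)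
  also have "\<dots> \<le> (\<integral>\<^sup>+A. ennreal ((1/2)^m) \<partial>?PA)"
    by (intro nn_integral_mono inner)
  also have "\<dots> = ennreal ((1/2)^m)" by simp
  finally have "emeasure (hash_family f m n) {h. hash_zero h x} \<le> ennreal ((1/2)^m)" .
  then show ?thesis
    by (simp add: measure_pmf.emeasure_eq_measure)
qed

lemma union_bound:
  assumes "finite S"
  shows "measure_pmf.prob (hash_family f m n) {h. 1 \<le> S_count S h} \<le> real (card S) * (1/2)^m"
proof -
  have eq: "{h. 1 \<le> S_count S h} = (\<Union>x\<in>S. {h. hash_zero h x})"
    using assms by (auto simp: S_count_def Suc_le_eq card_gt_0_iff)
  have "measure_pmf.prob (hash_family f m n) (\<Union>x\<in>S. {h. hash_zero h x})
      \<le> (\<Sum>x\<in>S. measure_pmf.prob (hash_family f m n) {h. hash_zero h x})"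
    by (rule measure_pmf.finite_measure_subadditive_finite) (use assms in auto)
  also have "\<dots> \<le> (\<Sum>x\<in>S. (1/2)^m)"
    by (intro sum_mono hash_zero_prob)
  finally show ?thesis using eq by simp
qed

lemma ln_ineq:
  fixes k :: real assumes "0 \<le> k"
  shows "2 * k / (2 + k) \<le> ln (1 + k)"
proof -
  let ?g = "\<lambda>x::real. ln (1 + x) - 2 * x / (2 + x)"
  have "?g 0 \<le> ?g k"
  proof (rule DERIV_nonneg_imp_nondecreasing[OF assms])
    fix x :: real assume x: "0 \<le> x" "x \<le> k"
    have "(?g has_real_derivative (1 / (1 + x) - 4 / (2 + x)^2)) (at x)"
      using x by (auto intro!: derivative_eq_intros simp: field_simps power2_eq_square)
    moreover have "0 \<le> 1 / (1 + x) - 4 / (2 + x)^2"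
    proof -
      have "1 / (1 + x) - 4 / (2 + x)^2 = x^2 / ((1+x)*(2+x)^2)"
        using x by (simp add: divide_simps) algebra
      then show ?thesis using x by simp
    qed
    ultimately show "\<exists>y. (?g has_real_derivative y) (at x) \<and> 0 \<le> y" by blast
  qed
  then show ?thesis by simp
qed


lemma chernoff:
  fixes p \<kappa> c :: real and T :: nat
  assumes p: "0 \<le> p" "p \<le> 1" and pq: "p \<le> c / (1 + \<kappa>)" and k: "0 < \<kappa>" and c: "0 < c"
  shows "measure_pmf.prob (binomial_pmf T p) {k. c * real T \<le> real k}
         \<le> exp (- (\<kappa>\<^sup>2 * c * real T / ((1 + \<kappa>) * (2 + \<kappa>))))"
proof -
  let ?M = "binomial_pmf T p"
  let ?A = "{k. c * real T \<le> real k}"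
  define z where "z = 1 + \<kappa>"
  have z: "1 \<le> z" "0 < z" using k by (auto simp: z_def)
  have setM: "set_pmf ?M \<subseteq> {..T}"
    using set_pmf_binomial_eq[OF p] by auto
  have "measure_pmf.prob ?M ?A = measure_pmf.prob ?M (?A \<inter> set_pmf ?M)"
    by (simp add: measure_Int_set_pmf)
  also have "\<dots> \<le> measure_pmf.prob ?M (?A \<inter> {..T})"
    using setM by (intro measure_pmf.finite_measure_mono) auto
  also have "\<dots> = (\<Sum>k\<in>?A \<inter> {..T}. pmf ?M k)"
    by (simp add: measure_measure_pmf_finite)
  also have "\<dots> \<le> (\<Sum>k\<in>?A \<inter> {..T}. pmf ?M k * z ^ k / z powr (c * real T))"
  proof (intro sum_mono)
    fix k assume "k \<in> ?A \<inter> {..T}"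
    then have "c * real T \<le> real k" by simp
    then have "z powr (c * real T) \<le> z ^ k"
      using z powr_mono[of "c * real T" "real k" z] by (simp add: powr_realpow)
    then have "1 \<le> z ^ k / z powr (c * real T)" using z by simp
    then show "pmf ?M k \<le> pmf ?M k * z ^ k / z powr (c * real T)"
      using mult_left_mono[of 1 "z ^ k / z powr (c * real T)" "pmf ?M k"] by simp
  qed
  also have "\<dots> \<le> (\<Sum>k\<in>{..T}. pmf ?M k * z ^ k / z powr (c * real T))"
    by (intro sum_mono2) (use z in auto)
  also have "\<dots> = (\<Sum>k\<le>T. of_nat (T choose k) * (p * z) ^ k * (1 - p) ^ (T - k)) / z powr (c * real T)"
    using p by (simp add: sum_divide_distrib power_mult_distrib algebra_simps)
  also have "\<dots> = (p * z + (1 - p)) ^ T / z powr (c * real T)"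
    by (simp add: binomial_ring)
  also have "\<dots> \<le> exp (p * \<kappa>) ^ T / z powr (c * real T)"
  proof (intro divide_right_mono power_mono)
    show "p * z + (1 - p) \<le> exp (p * \<kappa>)"
      using exp_ge_add_one_self[of "p * \<kappa>"] by (simp add: z_def algebra_simps)
    show "0 \<le> p * z + (1 - p)" using p z by simp
  qed simp
  also have "\<dots> = exp (real T * p * \<kappa> - c * real T * ln z)"
    using z by (simp add: powr_def exp_diff exp_of_nat_mult[symmetric] mult.assoc)
  also have "\<dots> \<le> exp (- (\<kappa>\<^sup>2 * c * real T / ((1 + \<kappa>) * (2 + \<kappa>))))"
  proof -
    have l: "2 * \<kappa> / (2 + \<kappa>) \<le> ln z" using ln_ineq[of \<kappa>] k by (simp add: z_def)
    have cT: "0 \<le> c * real T" using c by simp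
    have "real T * p * \<kappa> \<le> real T * (c / (1 + \<kappa>)) * \<kappa>"
      using pq k by (intro mult_right_mono mult_left_mono) auto
    moreover have "c * real T * (2 * \<kappa> / (2 + \<kappa>)) \<le> c * real T * ln z"
      using l cT by (rule mult_left_mono)
    moreover have "real T * (c / (1 + \<kappa>)) * \<kappa> - c * real T * (2 * \<kappa> / (2 + \<kappa>))
         = - (\<kappa>\<^sup>2 * c * real T / ((1 + \<kappa>) * (2 + \<kappa>)))"
      using k by (simp add: divide_simps) algebra
    ultimately show ?thesis by simp
  qed
  finally show ?thesis .
qed


theorem theorem3:
  fixes S :: "bool list set" and n m T :: nat and f \<kappa> c :: real
  assumes "S \<subseteq> {x. length x = n}"
    and "0 \<le> f" and "f \<le> 1/2"
    and "0 < m" and "m \<le> n" and "0 < T"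
    and "0 < \<kappa>" and "0 < c"
  shows "measure_pmf.prob (iid_list T (hash_family f m n))
           {hs. real (card S) \<ge>
              (let Y = card {k. k < T \<and> S_count S (hs ! k) \<ge> 1}
               in if real Y / real T \<ge> c then 2 ^ m * c / (1 + \<kappa>) else 0)}
         \<ge> 1 - exp (- (\<kappa>\<^sup>2 * c * real T / ((1 + \<kappa>) * (2 + \<kappa>))))"
proof -
  let ?P = "hash_family f m n"
  let ?M = "iid_list T ?P"
  let ?Y = "\<lambda>hs. card {k. k < T \<and> S_count S (hs ! k) \<ge> 1}"
  let ?E = "{hs. real (card S) \<ge>
              (let Y = ?Y hs in if real Y / real T \<ge> c then 2 ^ m * c / (1 + \<kappa>) else 0)}"
  let ?R = "exp (- (\<kappa>\<^sup>2 * c * real T / ((1 + \<kappa>) * (2 + \<kappa>))))"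
  have finS: "finite S"
    using assms(1) finite_lists_length_eq[of "UNIV :: bool set" n] by (auto intro: finite_subset)
  have Rpos: "0 < ?R" by simp
  show ?thesis
  proof (cases "2 ^ m * c / (1 + \<kappa>) \<le> real (card S)")
    case True
    then have "?E = UNIV" by (auto simp: Let_def)
    then have "measure_pmf.prob ?M ?E = 1" by simp
    then show ?thesis using Rpos by linarith
  next
    case False
    let ?p = "measure_pmf.prob ?P {h. 1 \<le> S_count S h}"
    have "?p \<le> real (card S) * (1/2)^m" by (rule union_bound[OF finS])
    also have "\<dots> \<le> c / (1 + \<kappa>)"
      using False assms by (simp add: field_simps power_divide)
    finally have pq: "?p \<le> c / (1 + \<kappa>)" .
    have compl: "UNIV - ?E \<subseteq> {hs. c * real T \<le> real (?Y hs)}"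
    proof
      fix hs assume "hs \<in> UNIV - ?E"
      then have "c \<le> real (?Y hs) / real T"
        using False by (auto simp: Let_def split: if_splits)
      then show "hs \<in> {hs. c * real T \<le> real (?Y hs)}"
        using assms(6) by (simp add: field_simps)
    qed
    have mapeq: "map_pmf ?Y ?M = map_pmf (\<lambda>xs. length (filter (\<lambda>h. 1 \<le> S_count S h) xs)) ?M"
    proof (rule map_pmf_cong[OF refl])
      fix hs assume "hs \<in> set_pmf ?M"
      then have "length hs = T" by (rule set_iid_list)
      then show "?Y hs = length (filter (\<lambda>h. 1 \<le> S_count S h) hs)"
        by (simp add: length_filter_conv_card)
    qed
    have "measure_pmf.prob ?M {hs. c * real T \<le> real (?Y hs)}
        = measure_pmf.prob (map_pmf ?Y ?M) {k. c * real T \<le> real k}"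
      by (simp add: vimage_def)
    also have "\<dots> = measure_pmf.prob (binomial_pmf T ?p) {k. c * real T \<le> real k}"
      using binom_map[of "\<lambda>h. 1 \<le> S_count S h" T ?P] mapeq by simp
    also have "\<dots> \<le> ?R"
      by (rule chernoff[OF _ _ pq]) (use assms in auto)
    finally have b: "measure_pmf.prob ?M {hs. c * real T \<le> real (?Y hs)} \<le> ?R" .
    have "measure_pmf.prob ?M (UNIV - ?E) \<le> ?R"
      using measure_pmf.finite_measure_mono[OF compl, of ?M] b by (auto intro: order_trans)
    moreover have "measure_pmf.prob ?M (UNIV - ?E) = 1 - measure_pmf.prob ?M ?E"
      using measure_pmf.prob_compl[of ?E ?M] by simp
    ultimately show ?thesis by linarith
  qed
qed

end
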